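(* Let $E$ be a $KB$-space, let $\mathfrak{B}$ be a Boolean subalgebra of $\mathfrak{B}(E)$, let $\xi$ be a forward filtration in $\mathfrak{B}$ and let $T\colon E\to E$ be a $\mathfrak{B}$-Volterra operator. Let $B'$ be the band generated by $\{(\mathbf{s}^k(x))_{k=0}^\infty: x\in\mathcal{M}_b(\xi)\}$ in the Banach lattice $\big(\bigoplus_{k=0}^\infty\mathcal{M}_b(L^k(\xi))\big)_{\ell_\infty}$. For each $l\ge1$, the operator $(\hat{T}_\xi^l)^{!}((y_k)_{k=0}^\infty)=(\mathbf{s}^k\hat{T}_\xi^l y_0)_{k=0}^\infty$ extends to a norm continuous operator $(\hat{T}_\xi^l)^{!}\colon B'\to\big(\bigoplus_{k=0}^\infty\mathcal{M}_b(L^k(\xi))\big)_{\ell_\infty}$ such that $(\hat{T}_\xi^l)^{!}=((\hat{T}_\xi^1)^{!})^l$; i.e. the correspondence $!$ is a discrete semigroup morphism between the semigroups generated by $\hat{T}_\xi$ and $(\hat{T}_\xi^1)^{!}$.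
   Context: A $KB$-space is a Banach lattice in which every increasing norm bounded sequence is norm convergent. $\mathfrak{B}(E)$ is the Boolean algebra of all order projections on $E$ (zero $\mathbf 0$, unit $\mathbf 1=I_E$, $\pi\le\rho$ iff $\pi\rho=\pi$). A positive operator $T$ is $\mathfrak{B}$-Volterra if for all $\pi\in\mathfrak{B}$, $x,y\in E$, $\pi x=\pi y$ implies $\pi Tx=\pi Ty$. A forward filtration in $\mathfrak{B}$ is a map $\xi\colon\{0,1,\dots,\infty\}\to\mathfrak{B}$ with $\xi_n\le\xi_{n+1}$, $\xi_0=\mathbf 0$, $\xi_\infty=\mathbf 1$; $L(\xi)_0=\xi_0$, $L(\xi)_n=\xi_{n+1}$ ($n\ge1$), $L^0(\xi)=\xi$. $\mathcal{M}_b(\xi)$ is the Banach lattice of sequences $(x_n)_{n\ge1}$ in $E$ with $\xi_nx_m=x_n$ for $m\ge n\ge1$ and $\sup_n\|x_n\|<\infty$ (coordinatewise order, sup norm). $\hat{T}_\xi((x_n))=(\xi_nTx_n)$; $\mathbf{s}((x_n)_{n\ge1})=(x_{n+1})_{n\ge1}$ maps $\mathcal{M}_b(L^k(\xi))$ to $\mathcal{M}_b(L^{k+1}(\xi))$, $\mathbf{s}^k$ is the $k$-fold composite and $\mathbf{s}^0$ the identity. $(\bigoplus_k X_k)_{\ell_\infty}$ is the space of norm bounded sequences with pointwise order and sup norm. *)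

theory Defs
  imports "HOL-Analysis.Analysis"
begin

definition babs :: "'a::{lattice,uminus} \<Rightarrow> 'a" where
  "babs x = sup x (- x)"

class banach_lattice = banach + ordered_real_vector + lattice +
  assumes norm_lattice_mono: "sup x (- x) \<le> sup y (- y) \<Longrightarrow> norm x \<le> norm y"

definition KB_space :: "'a::banach_lattice itself \<Rightarrow> bool" where
  "KB_space _ \<longleftrightarrow> (\<forall>f::nat \<Rightarrow> 'a. incseq f \<and> bounded (range f) \<longrightarrow> convergent f)"

definition is_lub_in :: "'b::order set \<Rightarrow> 'b set \<Rightarrow> 'b \<Rightarrow> bool" where
  "is_lub_in W D s \<longleftrightarrow> s \<in> W \<and> (\<forall>d\<in>D. d \<le> s) \<and> (\<forall>u\<in>W. (\<forall>d\<in>D. d \<le> u) \<longrightarrow> s \<le> u)"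

definition is_band :: "'a::banach_lattice set \<Rightarrow> bool" where
  "is_band B \<longleftrightarrow> 0 \<in> B \<and> (\<forall>x\<in>B. \<forall>y\<in>B. x + y \<in> B) \<and> (\<forall>c. \<forall>x\<in>B. c *\<^sub>R x \<in> B)
     \<and> (\<forall>x\<in>B. \<forall>y. babs y \<le> babs x \<longrightarrow> y \<in> B)
     \<and> (\<forall>D s. D \<subseteq> B \<and> is_lub_in UNIV D s \<longrightarrow> s \<in> B)"

definition disj_compl :: "'a::banach_lattice set \<Rightarrow> 'a set" where
  "disj_compl B = {x. \<forall>b\<in>B. inf (babs x) (babs b) = 0}"

definition is_projection_band :: "'a::banach_lattice set \<Rightarrow> bool" where
  "is_projection_band B \<longleftrightarrow> is_band B \<and> (\<forall>x. \<exists>b\<in>B. \<exists>c\<in>disj_compl B. x = b + c)"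

definition order_projections :: "('a::banach_lattice \<Rightarrow> 'a) set" where
  "order_projections = {P. \<exists>B. is_projection_band B \<and> (\<forall>x. P x \<in> B \<and> x - P x \<in> disj_compl B)}"

text \<open>Boolean subalgebra of the Boolean algebra of all order projections
  (meet = composition, complement = I - P, join = P + Q - PQ, zero = 0, unit = identity).\<close>
definition boolean_subalgebra :: "('a::banach_lattice \<Rightarrow> 'a) set \<Rightarrow> bool" where
  "boolean_subalgebra \<BB> \<longleftrightarrow> \<BB> \<subseteq> order_projections \<and> (\<lambda>_. 0) \<in> \<BB> \<and> id \<in> \<BB>
     \<and> (\<forall>P\<in>\<BB>. \<forall>Q\<in>\<BB>. P \<circ> Q \<in> \<BB>)
     \<and> (\<forall>P\<in>\<BB>. \<forall>Q\<in>\<BB>. (\<lambda>x. P x + Q x - P (Q x)) \<in> \<BB>)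
     \<and> (\<forall>P\<in>\<BB>. (\<lambda>x. x - P x) \<in> \<BB>)"

definition proj_le :: "('a \<Rightarrow> 'a) \<Rightarrow> ('a \<Rightarrow> 'a) \<Rightarrow> bool" where
  "proj_le P Q \<longleftrightarrow> P \<circ> Q = P"

text \<open>Forward filtration: \<xi>_0 = 0, \<xi>_n \<le> \<xi>_(n+1), all \<xi>_n in the subalgebra;
  the value \<xi>_\<infinity> = 1 is implicit (identity, which belongs to every Boolean subalgebra).\<close>
definition forward_filtration :: "('a::banach_lattice \<Rightarrow> 'a) set \<Rightarrow> (nat \<Rightarrow> 'a \<Rightarrow> 'a) \<Rightarrow> bool" where
  "forward_filtration \<BB> \<xi> \<longleftrightarrow> (\<forall>n. \<xi> n \<in> \<BB>) \<and> \<xi> 0 = (\<lambda>_. 0) \<and> (\<forall>n. proj_le (\<xi> n) (\<xi> (Suc n)))"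

definition positive_operator :: "('a::banach_lattice \<Rightarrow> 'a) \<Rightarrow> bool" where
  "positive_operator T \<longleftrightarrow> linear T \<and> (\<forall>x. 0 \<le> x \<longrightarrow> 0 \<le> T x)"

definition volterra :: "('a::banach_lattice \<Rightarrow> 'a) set \<Rightarrow> ('a \<Rightarrow> 'a) \<Rightarrow> bool" where
  "volterra \<BB> T \<longleftrightarrow> positive_operator T \<and>
     (\<forall>P\<in>\<BB>. \<forall>x y. P x = P y \<longrightarrow> P (T x) = P (T y))"

definition Lshift :: "(nat \<Rightarrow> 'a \<Rightarrow> 'a) \<Rightarrow> nat \<Rightarrow> 'a \<Rightarrow> 'a" where
  "Lshift \<xi> n = (if n = 0 then \<xi> 0 else \<xi> (Suc n))"

text \<open>Sequences (x_n)_(n\<ge>1) are represented as functions nat \<Rightarrow> 'a with the dummy value x 0 = 0.\<close>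
definition Mb :: "(nat \<Rightarrow> 'a::banach_lattice \<Rightarrow> 'a) \<Rightarrow> (nat \<Rightarrow> 'a) set" where
  "Mb \<xi> = {x. x 0 = 0 \<and> (\<forall>n m. 1 \<le> n \<and> n \<le> m \<longrightarrow> \<xi> n (x m) = x n) \<and> bounded (range x)}"

definition hatT :: "(nat \<Rightarrow> 'a \<Rightarrow> 'a) \<Rightarrow> ('a \<Rightarrow> 'a) \<Rightarrow> (nat \<Rightarrow> 'a) \<Rightarrow> (nat \<Rightarrow> 'a)" where
  "hatT \<xi> T x = (\<lambda>n. \<xi> n (T (x n)))"

definition sshift :: "(nat \<Rightarrow> 'a::zero) \<Rightarrow> (nat \<Rightarrow> 'a)" where
  "sshift x = (\<lambda>n. if n = 0 then 0 else x (Suc n))"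

definition Winf :: "(nat \<Rightarrow> 'a::banach_lattice \<Rightarrow> 'a) \<Rightarrow> (nat \<Rightarrow> nat \<Rightarrow> 'a) set" where
  "Winf \<xi> = {Y. (\<forall>k. Y k \<in> Mb ((Lshift ^^ k) \<xi>)) \<and> (\<exists>C. \<forall>k n. norm (Y k n) \<le> C)}"

definition normW :: "(nat \<Rightarrow> nat \<Rightarrow> 'a::real_normed_vector) \<Rightarrow> real" where
  "normW Y = Sup (range (\<lambda>(k, n). norm (Y k n)))"

definition band_in :: "(nat \<Rightarrow> nat \<Rightarrow> 'a::banach_lattice) set \<Rightarrow> (nat \<Rightarrow> nat \<Rightarrow> 'a) set \<Rightarrow> bool" where
  "band_in W A \<longleftrightarrow> A \<subseteq> W \<and> (\<lambda>k n. 0) \<in> A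
     \<and> (\<forall>Y\<in>A. \<forall>Z\<in>A. (\<lambda>k n. Y k n + Z k n) \<in> A)
     \<and> (\<forall>c. \<forall>Y\<in>A. (\<lambda>k n. c *\<^sub>R Y k n) \<in> A)
     \<and> (\<forall>Y\<in>A. \<forall>Z\<in>W. (\<forall>k n. babs (Z k n) \<le> babs (Y k n)) \<longrightarrow> Z \<in> A)
     \<and> (\<forall>D s. D \<subseteq> A \<and> is_lub_in W D s \<longrightarrow> s \<in> A)"

definition band_generated :: "(nat \<Rightarrow> nat \<Rightarrow> 'a::banach_lattice) set \<Rightarrow> (nat \<Rightarrow> nat \<Rightarrow> 'a) set \<Rightarrow> (nat \<Rightarrow> nat \<Rightarrow> 'a) set" where
  "band_generated W S = \<Inter>{A. band_in W A \<and> S \<subseteq> A}"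

definition Bprime :: "(nat \<Rightarrow> 'a::banach_lattice \<Rightarrow> 'a) \<Rightarrow> (nat \<Rightarrow> nat \<Rightarrow> 'a) set" where
  "Bprime \<xi> = band_generated (Winf \<xi>) {(\<lambda>k. (sshift ^^ k) x) | x. x \<in> Mb \<xi>}"

end

theory Submission
  imports Defs "HOL-Library.Lattice_Algebras"
begin

context banach_lattice begin
subclass lattice_ab_group_add ..
end

lemma babs_ge: "(x::'a::banach_lattice) \<le> babs x" "- x \<le> babs x"
  by (auto simp: babs_def)

lemma babs_nonneg: "0 \<le> babs (x::'a::banach_lattice)"
proof -
  have "0 \<le> babs x + babs x" using add_mono[OF babs_ge] by (metis add.right_inverse)
  then show ?thesis by simp
qed

lemma babs_pos: "0 \<le> (x::'a::banach_lattice) \<Longrightarrow> babs x = x"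
proof -
  assume "0 \<le> x"
  then have "- x \<le> x" using minus_le_self_iff by blast
  then show ?thesis unfolding babs_def by (simp add: sup.absorb1)
qed

lemma babs_minus: "babs (- (x::'a::banach_lattice)) = babs x"
  unfolding babs_def by (simp add: sup_commute)

lemma babs_babs: "babs (babs (x::'a::banach_lattice)) = babs x"
  using babs_pos babs_nonneg by blast

lemma norm_babs_mono: "babs (x::'a::banach_lattice) \<le> babs y \<Longrightarrow> norm x \<le> norm y"
  using norm_lattice_mono unfolding babs_def by blast

lemma norm_babs: "norm (babs (x::'a::banach_lattice)) = norm x"
  by (rule order.antisym; rule norm_babs_mono; simp add: babs_babs)

lemma norm_pos_mono: "0 \<le> (x::'a::banach_lattice) \<Longrightarrow> x \<le> y \<Longrightarrow> norm x \<le> norm y"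
  by (metis babs_pos norm_babs_mono order.trans)

lemma babs_0_iff: "babs (x::'a::banach_lattice) = 0 \<longleftrightarrow> x = 0"
  unfolding babs_def by simp

lemma babs_triangle: "babs ((x::'a::banach_lattice) + y) \<le> babs x + babs y"
proof -
  have "x + y \<le> babs x + babs y" "- (x + y) \<le> babs x + babs y"
    using add_mono[OF babs_ge(1) babs_ge(1)] add_mono[OF babs_ge(2) babs_ge(2)]
    by (auto simp: add.commute)
  then show ?thesis by (simp add: babs_def)
qed

lemma babs_scale: "babs (c *\<^sub>R (x::'a::banach_lattice)) \<le> \<bar>c\<bar> *\<^sub>R babs x"
proof (cases "c \<ge> 0")
  case True
  then have "c *\<^sub>R x \<le> c *\<^sub>R babs x" "c *\<^sub>R (-x) \<le> c *\<^sub>R babs x"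
    using babs_ge scaleR_left_mono by blast+
  then show ?thesis using True by (simp add: babs_def)
next
  case False
  then have "(-c) *\<^sub>R (-x) \<le> (-c) *\<^sub>R babs x" "(-c) *\<^sub>R x \<le> (-c) *\<^sub>R babs x"
    using babs_ge scaleR_left_mono by (metis le_minus_iff linear neg_0_le_iff_le)+
  then show ?thesis using False by (simp add: babs_def)
qed

lemma inf_add_le:
  fixes u v w :: "'a::banach_lattice"
  assumes "0 \<le> u" "0 \<le> v" "0 \<le> w"
  shows "inf (u + v) w \<le> inf u w + inf v w"
proof -
  have e: "inf u w + inf v w = inf (inf (u + v) (w + v)) (inf (u + w) (w + w))"
    by (simp only: add_inf_distrib_left add_inf_distrib_right)
  have "w \<le> w + v" "w \<le> u + w" "w \<le> w + w"
    using assms by (simp_all add: add_increasing add_increasing2)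
  then have "inf (u + v) w \<le> w + v" "inf (u + v) w \<le> u + w" "inf (u + v) w \<le> w + w"
    by (meson inf.coboundedI2 order.trans)+
  then show ?thesis unfolding e by simp
qed

lemma babs_prts: "babs (x::'a::banach_lattice) = pprt x - nprt x"
proof -
  have "pprt x - nprt x = sup x 0 + sup (-x) 0"
    by (simp add: pprt_def nprt_def neg_inf_eq_sup)
  also have "\<dots> = sup (x + sup (-x) 0) (sup (-x) 0)"
    by (simp add: add_sup_distrib_right)
  also have "\<dots> = sup (sup 0 x) (sup (-x) 0)"
    by (simp add: add_sup_distrib_left)
  also have "\<dots> = sup (sup x (-x)) 0"
    by (simp add: sup_aci)
  also have "\<dots> = babs x"
    using babs_nonneg[of x] by (simp add: babs_def sup.absorb1)
  finally show ?thesis by simp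
qed

lemma prts_disj: "inf (pprt (x::'a::banach_lattice)) (- nprt x) = 0"
proof -
  have "inf (pprt x) (- nprt x) + nprt x = inf (pprt x + nprt x) 0"
    by (simp add: add_inf_distrib_right)
  also have "\<dots> = inf x 0" using prts[of x] by simp
  also have "\<dots> = nprt x" by (simp add: nprt_def)
  finally show ?thesis by simp
qed

lemma disj_sup_diff:
  fixes p q :: "'a::banach_lattice"
  assumes "inf p q = 0"
  shows "sup (p - q) 0 = p"
proof -
  have "sup p q + (- q) = sup (p + - q) (q + - q)" by (rule add_sup_distrib_right)
  then have "sup (p - q) 0 = sup p q - q" by simp
  also have "sup p q = p + q - inf p q" unfolding eq_diff_eq using add_eq_inf_sup[of p q] by (rule sym)
  finally show ?thesis using assms by simp
qed

lemma inf_nonneg: "0 \<le> u \<Longrightarrow> 0 \<le> w \<Longrightarrow> 0 \<le> inf (u::'a::banach_lattice) w"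
  by simp

lemma disj_add:
  fixes u v w :: "'a::banach_lattice"
  assumes "0 \<le> u" "0 \<le> v" "0 \<le> w" "inf u w = 0" "inf v w = 0"
  shows "inf (u + v) w = 0"
  using inf_add_le[OF assms(1-3)] assms by (simp add: order.antisym)

lemma disj_mono:
  fixes u v w :: "'a::banach_lattice"
  assumes "0 \<le> u" "u \<le> v" "0 \<le> w" "inf v w = 0"
  shows "inf u w = 0"
proof -
  have "inf u w \<le> inf v w" using assms by (meson inf_mono order_refl)
  then show ?thesis using assms by (simp add: order.antisym)
qed

lemma pprt_disj_lemma:
  fixes b c :: "'a::banach_lattice"
  assumes "inf (babs b) (babs c) = 0"
  shows "pprt b \<le> pprt (b + c)"
proof -
  define p where "p = pprt b"
  define q where "q = - nprt b - nprt c"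
  have p0: "0 \<le> p" by (simp add: p_def)
  have nb: "0 \<le> - nprt b" "0 \<le> - nprt c" by simp_all
  have bb: "p \<le> babs b" "- nprt b \<le> babs b" "- nprt c \<le> babs c"
    by (simp_all add: babs_prts p_def)
  have d1: "inf p (- nprt b) = 0" using prts_disj by (simp add: p_def)
  have d2: "inf p (- nprt c) = 0"
  proof -
    have "inf (babs c) p = 0"
      using disj_mono[OF p0 bb(1) babs_nonneg] assms by (simp add: inf_commute)
    then have "inf (- nprt c) p = 0" using disj_mono[OF nb(2) bb(3) p0] by simp
    then show ?thesis by (simp add: inf_commute)
  qed
  have "inf (- nprt b + - nprt c) p = 0"
    using disj_add[OF nb p0] d1 d2 by (simp add: inf_commute)
  then have dq: "inf p q = 0" by (simp add: q_def inf_commute)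
  have "p - q \<le> b + c"
  proof -
    have "p - q = (pprt b + nprt b) + nprt c" by (simp add: p_def q_def algebra_simps)
    also have "\<dots> = b + nprt c" using prts[of b] by simp
    also have "\<dots> \<le> b + c" by (simp add: nprt_def)
    finally show ?thesis .
  qed
  then have "pprt (p - q) \<le> pprt (b + c)" by simp
  moreover have "pprt (p - q) = p" using disj_sup_diff[OF dq] by (simp add: pprt_def)
  ultimately show ?thesis by (simp add: p_def)
qed

lemma babs_disj_contr:
  fixes b c :: "'a::banach_lattice"
  assumes "inf (babs b) (babs c) = 0"
  shows "babs b \<le> babs (b + c)"
proof -
  have 1: "pprt b \<le> pprt (b + c)" by (rule pprt_disj_lemma[OF assms])
  have "pprt (-b) \<le> pprt (-b + -c)" using assms by (intro pprt_disj_lemma) (simp add: babs_minus)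
  then have "pprt (-b) \<le> pprt (-(b+c))" unfolding minus_add_distrib .
  then have 2: "- nprt b \<le> - nprt (b+c)" by (simp only: pprt_neg)
  show ?thesis unfolding babs_prts using add_mono[OF 1 2] by simp
qed

lemma disj_nat_scale:
  fixes u w :: "'a::banach_lattice"
  assumes "0 \<le> u" "0 \<le> w" "inf u w = 0"
  shows "inf (real n *\<^sub>R u) w = 0"
proof (induction n)
  case 0
  then show ?case using assms by (simp add: inf.absorb1)
next
  case (Suc n)
  have "real (Suc n) *\<^sub>R u = u + real n *\<^sub>R u" by (simp add: algebra_simps)
  moreover have "0 \<le> real n *\<^sub>R u" by (intro scaleR_nonneg_nonneg) (simp_all add: assms)
  ultimately show ?case using disj_add[OF assms(1) _ assms(2) assms(3) Suc.IH] by simp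
qed

lemma disj_compl_add:
  assumes "x \<in> disj_compl B" "y \<in> disj_compl B"
  shows "x + y \<in> disj_compl B"
  unfolding disj_compl_def
proof (intro CollectI ballI)
  fix b assume "b \<in> B"
  then have h: "inf (babs x) (babs b) = 0" "inf (babs y) (babs b) = 0"
    using assms by (auto simp: disj_compl_def)
  have "inf (babs x + babs y) (babs b) = 0"
    by (rule disj_add[OF babs_nonneg babs_nonneg babs_nonneg h])
  then show "inf (babs (x + y)) (babs b) = 0"
    by (rule disj_mono[OF babs_nonneg babs_triangle babs_nonneg])
qed

lemma disj_compl_scale:
  assumes "x \<in> disj_compl B"
  shows "c *\<^sub>R x \<in> disj_compl B"
  unfolding disj_compl_def
proof (intro CollectI ballI)
  fix b assume "b \<in> B"
  then have h: "inf (babs x) (babs b) = 0"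
    using assms by (auto simp: disj_compl_def)
  define n where "n = nat \<lceil>\<bar>c\<bar>\<rceil>"
  have "\<bar>c\<bar> \<le> real n" unfolding n_def by linarith
  then have "\<bar>c\<bar> *\<^sub>R babs x \<le> real n *\<^sub>R babs x" by (rule scaleR_right_mono[OF _ babs_nonneg])
  then have le: "babs (c *\<^sub>R x) \<le> real n *\<^sub>R babs x" using babs_scale order.trans by blast
  have "inf (real n *\<^sub>R babs x) (babs b) = 0"
    by (rule disj_nat_scale[OF babs_nonneg babs_nonneg h])
  then show "inf (babs (c *\<^sub>R x)) (babs b) = 0"
    by (rule disj_mono[OF babs_nonneg le babs_nonneg])
qed

lemma band_disj_zero:
  assumes "x \<in> B" "x \<in> disj_compl B"
  shows "x = 0"
proof -
  have "inf (babs x) (babs x) = 0" using assms by (auto simp: disj_compl_def)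
  then show ?thesis by (simp add: babs_0_iff)
qed

lemma band_closed:
  assumes "is_band B" "x \<in> B" "y \<in> B"
  shows "x + y \<in> B" "c *\<^sub>R x \<in> B" "x - y \<in> B"
proof -
  show "x + y \<in> B" "c *\<^sub>R x \<in> B" using assms by (auto simp: is_band_def)
  have "\<forall>c. \<forall>x\<in>B. c *\<^sub>R x \<in> B" using assms(1) by (simp add: is_band_def)
  then have "(-1::real) *\<^sub>R y \<in> B" using assms(3) by blast
  then have "x + (-1::real) *\<^sub>R y \<in> B" using assms by (auto simp: is_band_def)
  then show "x - y \<in> B" by simp
qed

lemma decomp_unique:
  assumes "is_band B" "b1 \<in> B" "b2 \<in> B" "c1 \<in> disj_compl B" "c2 \<in> disj_compl B"
    and "b1 + c1 = b2 + c2"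
  shows "b1 = b2"
proof -
  have "b1 - b2 \<in> B" by (rule band_closed(3)[OF assms(1-3)])
  moreover have "c2 + (-1::real) *\<^sub>R c1 \<in> disj_compl B"
    by (rule disj_compl_add[OF assms(5) disj_compl_scale[OF assms(4)]])
  moreover have "c2 + (-1::real) *\<^sub>R c1 = b1 - b2"
  proof -
    have "c2 + (-1::real) *\<^sub>R c1 = (b2 + c2) - c1 - b2" by simp
    also have "\<dots> = (b1 + c1) - c1 - b2" using assms(6) by simp
    also have "\<dots> = b1 - b2" by simp
    finally show ?thesis .
  qed
  ultimately have "b1 - b2 = 0" using band_disj_zero[of "b1 - b2" B] by simp
  then show ?thesis by simp
qed

lemma op_props:
  fixes P :: "'a::banach_lattice \<Rightarrow> 'a"
  assumes "P \<in> order_projections"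
  shows "P (x + y) = P x + P y" "P (c *\<^sub>R x) = c *\<^sub>R P x" "babs (P x) \<le> babs x"
    "norm (P x) \<le> norm x"
proof -
  obtain B where B: "is_projection_band B" "\<And>x. P x \<in> B \<and> x - P x \<in> disj_compl B"
    using assms unfolding order_projections_def by blast
  have bB: "is_band B" using B(1) by (simp add: is_projection_band_def)
  show "P (x + y) = P x + P y"
  proof (rule decomp_unique[OF bB])
    show "P (x + y) \<in> B" "x + y - P (x + y) \<in> disj_compl B" using B(2) by blast+
    show "P x + P y \<in> B" using B(2) band_closed(1)[OF bB] by blast
    show "(x - P x) + (y - P y) \<in> disj_compl B" using B(2) disj_compl_add by blast
    show "P (x + y) + (x + y - P (x + y)) = P x + P y + ((x - P x) + (y - P y))"
      by (simp add: algebra_simps)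
  qed
  show "P (c *\<^sub>R x) = c *\<^sub>R P x"
  proof (rule decomp_unique[OF bB])
    show "P (c *\<^sub>R x) \<in> B" "c *\<^sub>R x - P (c *\<^sub>R x) \<in> disj_compl B" using B(2) by blast+
    show "c *\<^sub>R P x \<in> B" using B(2) band_closed(2)[OF bB] by blast
    show "c *\<^sub>R (x - P x) \<in> disj_compl B" using B(2) disj_compl_scale by blast
    show "P (c *\<^sub>R x) + (c *\<^sub>R x - P (c *\<^sub>R x)) = c *\<^sub>R P x + c *\<^sub>R (x - P x)"
      by (simp add: algebra_simps)
  qed
  have "inf (babs (x - P x)) (babs (P x)) = 0" using B(2)[of x] by (auto simp: disj_compl_def)
  then have "babs (P x) \<le> babs (P x + (x - P x))"
    by (intro babs_disj_contr) (simp add: inf_commute)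
  then show "babs (P x) \<le> babs x" by simp
  then show "norm (P x) \<le> norm x" by (rule norm_babs_mono)
qed

lemma closed_cone: "closed {x::'a::banach_lattice. 0 \<le> x}"
proof (rule closed_sequential_limits[THEN iffD2], intro allI impI, elim conjE)
  fix f :: "nat \<Rightarrow> 'a" and z
  assume f: "\<forall>n. f n \<in> {x. 0 \<le> x}" and lim: "f \<longlonglongrightarrow> z"
  define w where "w = sup (-z) 0"
  have le: "norm w \<le> norm (f n - z)" for n
  proof (rule norm_babs_mono)
    have w0: "0 \<le> w" by (simp add: w_def)
    have "-z \<le> f n - z" using f by simp
    then have "w \<le> sup (f n - z) 0" unfolding w_def by (meson order_refl sup_mono)
    also have "\<dots> \<le> babs (f n - z)"
      by (intro le_supI babs_ge(1) babs_nonneg)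
    finally show "babs w \<le> babs (f n - z)" using babs_pos[OF w0] by simp
  qed
  have "(\<lambda>n. norm (f n - z)) \<longlonglongrightarrow> 0"
    by (intro tendsto_norm_zero LIM_zero lim)
  then have "norm w \<le> 0"
    by (rule LIMSEQ_le_const) (use le in auto)
  then have "w = 0" by simp
  moreover have "-z \<le> w" by (simp add: w_def)
  ultimately have "-z \<le> 0" by simp
  then have "0 \<le> z" by simp
  then show "z \<in> {x. 0 \<le> x}" by simp
qed

lemma pos_op_basic:
  fixes T :: "'a::banach_lattice \<Rightarrow> 'a"
  assumes "positive_operator T"
  shows "x \<le> y \<Longrightarrow> T x \<le> T y" "babs (T x) \<le> T (babs x)" "norm (T x) \<le> norm (T (babs x))"
proof -
  have lin: "linear T" and pos: "\<And>x. 0 \<le> x \<Longrightarrow> 0 \<le> T x"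
    using assms by (auto simp: positive_operator_def)
  show mono: "x \<le> y \<Longrightarrow> T x \<le> T y" for x y
  proof -
    assume "x \<le> y"
    then have "0 \<le> T (y - x)" using pos by simp
    then show ?thesis using linear_diff[OF lin] by simp
  qed
  have "T x \<le> T (babs x)" "T (-x) \<le> T (babs x)" using mono babs_ge by blast+
  then show b: "babs (T x) \<le> T (babs x)" using linear_neg[OF lin] by (simp add: babs_def)
  have eq: "T (babs x) = babs (T (babs x))" by (rule babs_pos[OF pos[OF babs_nonneg], symmetric])
  have "babs (T x) \<le> babs (T (babs x))" using b eq by (rule ord_le_eq_trans)
  then show "norm (T x) \<le> norm (T (babs x))" by (rule norm_babs_mono)
qed

lemma pos_op_bounded:
  fixes T :: "'a::banach_lattice \<Rightarrow> 'a"
  assumes "positive_operator T"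
  shows "\<exists>K\<ge>0. \<forall>y. norm (T y) \<le> K * norm y"
proof (rule ccontr)
  assume nb: "\<not> ?thesis"
  have lin: "linear T" and pos: "\<And>x. 0 \<le> x \<Longrightarrow> 0 \<le> T x"
    using assms by (auto simp: positive_operator_def)
  have "\<exists>y. norm (T y) > 4 ^ n * norm y" for n :: nat
  proof (rule ccontr)
    assume "\<not> ?thesis"
    then have "\<forall>y. norm (T y) \<le> 4 ^ n * norm y" by (simp add: not_less)
    moreover have "(0::real) \<le> 4 ^ n" by simp
    ultimately show False using nb by blast
  qed
  then obtain y where y: "\<And>n. norm (T (y n)) > 4 ^ n * norm (y n)" by metis
  have yn0: "y n \<noteq> 0" for n
    using y[of n] linear_0[OF lin] by auto
  define v where "v n = (1 / norm (y n)) *\<^sub>R babs (y n)" for n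
  have v0: "0 \<le> v n" for n
    unfolding v_def by (intro scaleR_nonneg_nonneg) (simp_all add: babs_nonneg)
  have nv: "norm (v n) = 1" for n
    unfolding v_def using yn0[of n] by (simp add: norm_babs)
  have Tv: "norm (T (v n)) > 4 ^ n" for n
  proof -
    have "norm (T (v n)) = norm (T (babs (y n))) / norm (y n)"
      unfolding v_def linear_scale[OF lin] using yn0[of n] by simp
    moreover have "norm (T (babs (y n))) > 4 ^ n * norm (y n)"
      using y[of n] pos_op_basic(3)[OF assms, of "y n"] by linarith
    ultimately show ?thesis using yn0[of n] by (simp add: pos_less_divide_eq)
  qed
  define f where "f n = (1/2) ^ n *\<^sub>R v n" for n
  have f0: "0 \<le> f n" for n unfolding f_def by (intro scaleR_nonneg_nonneg v0) simp
  have "summable (\<lambda>n. norm (f n))"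
    unfolding f_def using nv by (simp add: summable_geometric)
  then have sf: "summable f" by (rule summable_norm_cancel)
  define x where "x = suminf f"
  have fx: "f n \<le> x" for n
  proof -
    have lim: "(\<lambda>N. (\<Sum>i<N. f i) - f n) \<longlonglongrightarrow> x - f n"
      using sf unfolding x_def by (intro tendsto_diff summable_LIMSEQ) auto
    have ev: "eventually (\<lambda>N. (\<Sum>i<N. f i) - f n \<in> {x. 0 \<le> x}) sequentially"
    proof (rule eventually_sequentiallyI[of "Suc n"])
      fix N assume "Suc n \<le> N"
      then have "n \<in> {..<N}" by simp
      then have "(\<Sum>i<N. f i) = f n + (\<Sum>i\<in>{..<N} - {n}. f i)"
        by (simp add: sum.remove)
      moreover have "0 \<le> (\<Sum>i\<in>{..<N} - {n}. f i)" by (rule sum_nonneg) (simp add: f0)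
      ultimately show "(\<Sum>i<N. f i) - f n \<in> {x. 0 \<le> x}" by simp
    qed
    have "x - f n \<in> {x. 0 \<le> x}"
      by (rule Lim_in_closed_set[OF closed_cone ev _ lim]) simp
    then show ?thesis by simp
  qed
  have big: "norm (T x) > 2 ^ n" for n :: nat
  proof -
    have "T (f n) \<le> T x" using fx pos_op_basic(1)[OF assms] by blast
    moreover have "0 \<le> T (f n)" using pos f0 by blast
    ultimately have "norm (T (f n)) \<le> norm (T x)" using norm_pos_mono by blast
    moreover have "norm (T (f n)) = (1/2)^n * norm (T (v n))"
      unfolding f_def linear_scale[OF lin] by simp
    moreover have "(1/2)^n * norm (T (v n)) > (1/2)^n * 4 ^ n"
      using Tv[of n] by (intro mult_strict_left_mono) simp_all
    moreover have "(1/2::real)^n * 4 ^ n = 2 ^ n"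
      by (simp add: power_mult_distrib[symmetric])
    ultimately show ?thesis by linarith
  qed
  obtain n :: nat where n: "norm (T x) < n" using reals_Archimedean2 by blast
  have "n < (2::nat) ^ n" by simp
  then have "real n < real ((2::nat) ^ n)" by (simp only: of_nat_less_iff)
  then have "real n < 2 ^ n" by simp
  then show False using big[of n] n by linarith
qed

lemma op_zero: "P \<in> order_projections \<Longrightarrow> P 0 = 0"
  using op_props(2)[of P 0 0] by simp

lemma op_diff: "P \<in> order_projections \<Longrightarrow> P (a - b) = P a - P b"
  using op_props(1)[of P "a - b" b] by (simp add: eq_diff_eq)

lemma op_idem:
  fixes P :: "'a::banach_lattice \<Rightarrow> 'a"
  assumes "P \<in> order_projections"
  shows "P (P x) = P x"
proof -
  obtain B where B: "is_projection_band B" "\<And>x. P x \<in> B \<and> x - P x \<in> disj_compl B"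
    using assms unfolding order_projections_def by blast
  have bB: "is_band B" using B(1) by (simp add: is_projection_band_def)
  have z: "(0::'a) \<in> disj_compl B"
    unfolding disj_compl_def
  proof (intro CollectI ballI)
    fix b assume "b \<in> B"
    have "babs (0::'a) = 0" by (simp add: babs_0_iff)
    then show "inf (babs (0::'a)) (babs b) = 0" using babs_nonneg[of b] by (simp add: inf_absorb1)
  qed
  show ?thesis
  proof (rule decomp_unique[OF bB])
    show "P (P x) \<in> B" "P x \<in> B" "P x - P (P x) \<in> disj_compl B" "0 \<in> disj_compl B"
      using B(2) z by blast+
    show "P (P x) + (P x - P (P x)) = P x + 0" by simp
  qed
qed

lemma ff_op: "boolean_subalgebra \<BB> \<Longrightarrow> forward_filtration \<BB> \<xi> \<Longrightarrow> \<xi> n \<in> order_projections"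
  unfolding boolean_subalgebra_def forward_filtration_def by blast

lemma ff_comp:
  assumes "boolean_subalgebra \<BB>" "forward_filtration \<BB> \<xi>" "n \<le> m"
  shows "\<xi> n (\<xi> m y) = \<xi> n y"
  using assms(3)
proof (induction m arbitrary: y rule: dec_induct)
  case base
  then show ?case using op_idem[OF ff_op[OF assms(1,2)]] by blast
next
  case (step m)
  have "\<forall>k. \<xi> k \<circ> \<xi> (Suc k) = \<xi> k" using assms(2) unfolding forward_filtration_def proj_le_def by blast
  then have e: "\<And>k z. \<xi> k (\<xi> (Suc k) z) = \<xi> k z" by (metis comp_apply)
  have "\<xi> n (\<xi> (Suc m) y) = \<xi> n (\<xi> m (\<xi> (Suc m) y))" using step.IH[of "\<xi> (Suc m) y"] by simp
  also have "\<dots> = \<xi> n (\<xi> m y)" using e by simp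
  also have "\<dots> = \<xi> n y" using step.IH by simp
  finally show ?case .
qed

lemma Lsh_pow: "(Lshift ^^ k) \<xi> n = (if n = 0 then \<xi> 0 else \<xi> (n + k))"
proof (induction k arbitrary: n)
  case 0
  then show ?case by simp
next
  case (Suc k)
  then show ?case by (simp add: Lshift_def)
qed

lemma ssh_pow: "(sshift ^^ k) z n = (if k = 0 then z n else if n = 0 then 0 else z (n + k))"
proof (induction k arbitrary: n)
  case 0
  then show ?case by simp
next
  case (Suc k)
  then show ?case by (simp add: sshift_def)
qed

lemma ssh_pow_pos: "1 \<le> n \<Longrightarrow> (sshift ^^ k) z n = z (n + k)"
  by (simp add: ssh_pow)

lemma ssh_pow_norm: "\<exists>m. norm ((sshift ^^ k) (z :: nat \<Rightarrow> 'a::real_normed_vector) n) \<le> norm (z m)"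
  by (cases "k = 0 \<or> n \<noteq> 0") (auto simp: ssh_pow)

lemma ssh_pow_add: "(sshift ^^ k) (\<lambda>n. (x::nat \<Rightarrow> 'a::real_vector) n + y n) = (\<lambda>n. (sshift ^^ k) x n + (sshift ^^ k) y n)"
  by (rule ext) (simp add: ssh_pow)

lemma ssh_pow_scale: "(sshift ^^ k) (\<lambda>n. c *\<^sub>R (x::nat \<Rightarrow> 'a::real_vector) n) = (\<lambda>n. c *\<^sub>R (sshift ^^ k) x n)"
  by (rule ext) (simp add: ssh_pow)

lemma ssh_pow_diff: "(sshift ^^ k) (\<lambda>n. (x::nat \<Rightarrow> 'a::real_vector) n - y n) = (\<lambda>n. (sshift ^^ k) x n - (sshift ^^ k) y n)"
  by (rule ext) (simp add: ssh_pow)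

lemma Lsh_op:
  assumes "boolean_subalgebra \<BB>" "forward_filtration \<BB> \<xi>"
  shows "(Lshift ^^ k) \<xi> n \<in> order_projections"
  by (simp add: Lsh_pow ff_op[OF assms])

lemma orbit_Winf:
  assumes "boolean_subalgebra \<BB>" "forward_filtration \<BB> \<xi>" "z \<in> Mb \<xi>"
  shows "(\<lambda>k. (sshift ^^ k) z) \<in> Winf \<xi>"
proof -
  have z0: "z 0 = 0" and zc: "\<And>n m. 1 \<le> n \<Longrightarrow> n \<le> m \<Longrightarrow> \<xi> n (z m) = z n"
    and zb: "bounded (range z)"
    using assms(3) by (auto simp: Mb_def)
  obtain C where C: "\<And>n. norm (z n) \<le> C" using zb unfolding bounded_iff by blast
  have bd: "norm ((sshift ^^ k) z n) \<le> C" for k n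
    using ssh_pow_norm[of k z n] C order.trans by blast
  have "(sshift ^^ k) z \<in> Mb ((Lshift ^^ k) \<xi>)" for k
    unfolding Mb_def
  proof (intro CollectI conjI allI impI)
    show "(sshift ^^ k) z 0 = 0" using z0 by (simp add: ssh_pow)
    show "bounded (range ((sshift ^^ k) z))" unfolding bounded_iff using bd by blast
    fix n m :: nat assume "1 \<le> n \<and> n \<le> m"
    then show "(Lshift ^^ k) \<xi> n ((sshift ^^ k) z m) = (sshift ^^ k) z n"
      using zc[of "n + k" "m + k"] by (simp add: Lsh_pow ssh_pow_pos)
  qed
  then show ?thesis unfolding Winf_def using bd by blast
qed

lemma hatT_add:
  assumes "boolean_subalgebra \<BB>" "forward_filtration \<BB> \<xi>" "positive_operator T"
  shows "hatT \<xi> T (\<lambda>n. x n + y n) = (\<lambda>n. hatT \<xi> T x n + hatT \<xi> T y n)"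
proof -
  have lin: "linear T" using assms(3) by (simp add: positive_operator_def)
  show ?thesis unfolding hatT_def
    by (rule ext) (simp add: linear_add[OF lin] op_props(1)[OF ff_op[OF assms(1,2)]])
qed

lemma hatT_scale:
  assumes "boolean_subalgebra \<BB>" "forward_filtration \<BB> \<xi>" "positive_operator T"
  shows "hatT \<xi> T (\<lambda>n. c *\<^sub>R x n) = (\<lambda>n. c *\<^sub>R hatT \<xi> T x n)"
proof -
  have lin: "linear T" using assms(3) by (simp add: positive_operator_def)
  show ?thesis unfolding hatT_def
    by (rule ext) (simp add: linear_scale[OF lin] op_props(2)[OF ff_op[OF assms(1,2)]])
qed

lemma hatT_diff:
  assumes "boolean_subalgebra \<BB>" "forward_filtration \<BB> \<xi>" "positive_operator T"
  shows "hatT \<xi> T (\<lambda>n. x n - y n) = (\<lambda>n. hatT \<xi> T x n - hatT \<xi> T y n)"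
proof -
  have lin: "linear T" using assms(3) by (simp add: positive_operator_def)
  show ?thesis unfolding hatT_def
    by (rule ext) (simp add: linear_diff[OF lin] op_diff[OF ff_op[OF assms(1,2)]])
qed

lemma hatT_pow_add:
  assumes "boolean_subalgebra \<BB>" "forward_filtration \<BB> \<xi>" "positive_operator T"
  shows "(hatT \<xi> T ^^ l) (\<lambda>n. x n + y n) = (\<lambda>n. (hatT \<xi> T ^^ l) x n + (hatT \<xi> T ^^ l) y n)"
  by (induction l) (simp_all add: hatT_add[OF assms])

lemma hatT_pow_scale:
  assumes "boolean_subalgebra \<BB>" "forward_filtration \<BB> \<xi>" "positive_operator T"
  shows "(hatT \<xi> T ^^ l) (\<lambda>n. c *\<^sub>R x n) = (\<lambda>n. c *\<^sub>R (hatT \<xi> T ^^ l) x n)"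
  by (induction l) (simp_all add: hatT_scale[OF assms])

lemma hatT_pow_diff:
  assumes "boolean_subalgebra \<BB>" "forward_filtration \<BB> \<xi>" "positive_operator T"
  shows "(hatT \<xi> T ^^ l) (\<lambda>n. x n - y n) = (\<lambda>n. (hatT \<xi> T ^^ l) x n - (hatT \<xi> T ^^ l) y n)"
  by (induction l) (simp_all add: hatT_diff[OF assms])

lemma hatT_pow_norm:
  assumes "boolean_subalgebra \<BB>" "forward_filtration \<BB> \<xi>" "positive_operator T"
    and K: "K \<ge> 0" "\<And>y. norm (T y) \<le> K * norm y"
  shows "norm ((hatT \<xi> T ^^ l) x n) \<le> K ^ l * norm (x n)"
proof (induction l arbitrary: n)
  case 0
  then show ?case by simp
next
  case (Suc l)
  have "norm ((hatT \<xi> T ^^ Suc l) x n) = norm (\<xi> n (T ((hatT \<xi> T ^^ l) x n)))"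
    by (simp add: hatT_def)
  also have "\<dots> \<le> norm (T ((hatT \<xi> T ^^ l) x n))"
    by (rule op_props(4)[OF ff_op[OF assms(1,2)]])
  also have "\<dots> \<le> K * norm ((hatT \<xi> T ^^ l) x n)" by (rule K(2))
  also have "\<dots> \<le> K * (K ^ l * norm (x n))" by (rule mult_left_mono[OF Suc.IH K(1)])
  finally show ?case by simp
qed

lemma hatT_Mb:
  assumes "boolean_subalgebra \<BB>" "forward_filtration \<BB> \<xi>" "volterra \<BB> T"
    and K: "K \<ge> 0" "\<And>y. norm (T y) \<le> K * norm y"
    and x: "x \<in> Mb \<xi>"
  shows "hatT \<xi> T x \<in> Mb \<xi>"
proof -
  have pos: "positive_operator T" and volt: "\<And>P x y. P \<in> \<BB> \<Longrightarrow> P x = P y \<Longrightarrow> P (T x) = P (T y)"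
    using assms(3) by (auto simp: volterra_def)
  have xB: "\<And>n. \<xi> n \<in> \<BB>" and x0: "\<xi> 0 = (\<lambda>_. 0)"
    using assms(2) by (auto simp: forward_filtration_def)
  have z0: "x 0 = 0" and zc: "\<And>n m. 1 \<le> n \<Longrightarrow> n \<le> m \<Longrightarrow> \<xi> n (x m) = x n"
    and zb: "bounded (range x)"
    using x by (auto simp: Mb_def)
  obtain C where C: "\<And>n. norm (x n) \<le> C" using zb unfolding bounded_iff by blast
  show ?thesis unfolding Mb_def
  proof (intro CollectI conjI allI impI)
    show "hatT \<xi> T x 0 = 0" by (simp add: hatT_def x0)
    have "norm (hatT \<xi> T x n) \<le> K * C" for n
      using hatT_pow_norm[OF assms(1,2) pos K, of 1 x n] C[of n] mult_left_mono[OF C[of n] K(1)]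
      by simp
    then show "bounded (range (hatT \<xi> T x))" unfolding bounded_iff by blast
    fix n m :: nat assume nm: "1 \<le> n \<and> n \<le> m"
    have "\<xi> n (hatT \<xi> T x m) = \<xi> n (T (x m))"
      unfolding hatT_def using ff_comp[OF assms(1,2)] nm by blast
    also have "\<dots> = \<xi> n (T (x n))"
    proof (rule volt[OF xB])
      show "\<xi> n (x m) = \<xi> n (x n)" using zc nm by simp
    qed
    finally show "\<xi> n (hatT \<xi> T x m) = hatT \<xi> T x n" by (simp add: hatT_def)
  qed
qed

lemma hatT_pow_Mb:
  assumes "boolean_subalgebra \<BB>" "forward_filtration \<BB> \<xi>" "volterra \<BB> T"
    and K: "K \<ge> 0" "\<And>y. norm (T y) \<le> K * norm y"
    and x: "x \<in> Mb \<xi>"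
  shows "(hatT \<xi> T ^^ l) x \<in> Mb \<xi>"
  by (induction l) (simp_all add: x hatT_Mb[OF assms(1-3) K])

lemma Winf_band:
  assumes "boolean_subalgebra \<BB>" "forward_filtration \<BB> \<xi>"
  shows "band_in (Winf \<xi>) (Winf \<xi>)"
proof -
  note opk = Lsh_op[OF assms]
  have zero: "(\<lambda>k n. 0) \<in> Winf \<xi>"
    unfolding Winf_def Mb_def by (auto simp: op_zero[OF opk])
  have addc: "(\<lambda>k n. Y k n + Z k n) \<in> Winf \<xi> \<and> (\<lambda>k n. c *\<^sub>R Y k n) \<in> Winf \<xi>"
    if Y: "Y \<in> Winf \<xi>" and Z: "Z \<in> Winf \<xi>" for Y Z c
  proof
  obtain C1 where C1: "\<And>k n. norm (Y k n) \<le> C1" using Y by (auto simp: Winf_def)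
  have Ym: "\<And>k. Y k \<in> Mb ((Lshift ^^ k) \<xi>)" using Y by (auto simp: Winf_def)
  {
    obtain C2 where C2: "\<And>k n. norm (Z k n) \<le> C2" using Z by (auto simp: Winf_def)
    have Zm: "\<And>k. Z k \<in> Mb ((Lshift ^^ k) \<xi>)" using Z by (auto simp: Winf_def)
    have bd: "norm (Y k n + Z k n) \<le> C1 + C2" for k n
      using norm_triangle_ineq[of "Y k n" "Z k n"] C1[of k n] C2[of k n] by linarith
    show "(\<lambda>k n. Y k n + Z k n) \<in> Winf \<xi>"
      unfolding Winf_def
    proof (intro CollectI conjI allI exI)
      fix k
      show "(\<lambda>n. Y k n + Z k n) \<in> Mb ((Lshift ^^ k) \<xi>)"
        using Ym[of k] Zm[of k] bd[of k] unfolding Mb_def bounded_iff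
        by (auto simp: op_props(1)[OF opk])
    next
      fix k n show "norm (Y k n + Z k n) \<le> C1 + C2" by (rule bd)
    qed
  }
  have bd: "norm (c *\<^sub>R Y k n) \<le> \<bar>c\<bar> * C1" for k n
    using C1[of k n] by (simp add: mult_left_mono)
  show "(\<lambda>k n. c *\<^sub>R Y k n) \<in> Winf \<xi>"
    unfolding Winf_def
  proof (intro CollectI conjI allI exI)
    fix k
    show "(\<lambda>n. c *\<^sub>R Y k n) \<in> Mb ((Lshift ^^ k) \<xi>)"
      using Ym[of k] bd[of k] unfolding Mb_def bounded_iff
      by (auto simp: op_props(2)[OF opk])
  next
    fix k n show "norm (c *\<^sub>R Y k n) \<le> \<bar>c\<bar> * C1" by (rule bd)
  qed
  qed
  show ?thesis unfolding band_in_def using zero addc by (auto simp: is_lub_in_def)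
qed

lemma Bprime_Winf:
  assumes "boolean_subalgebra \<BB>" "forward_filtration \<BB> \<xi>"
  shows "Bprime \<xi> \<subseteq> Winf \<xi>"
proof -
  have "{(\<lambda>k. (sshift ^^ k) x) | x. x \<in> Mb \<xi>} \<subseteq> Winf \<xi>"
    using orbit_Winf[OF assms] by blast
  then have "Winf \<xi> \<in> {A. band_in (Winf \<xi>) A \<and> {(\<lambda>k. (sshift ^^ k) x) | x. x \<in> Mb \<xi>} \<subseteq> A}"
    using Winf_band[OF assms] by blast
  then show ?thesis unfolding Bprime_def band_generated_def by blast
qed

lemma gen_Bprime: "x \<in> Mb \<xi> \<Longrightarrow> (\<lambda>k. (sshift ^^ k) x) \<in> Bprime \<xi>"
  unfolding Bprime_def band_generated_def by blast

lemma normW_upper: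
  assumes "\<And>k n. norm (Y k n) \<le> C"
  shows "norm (Y k n) \<le> normW Y"
  unfolding normW_def
proof (rule cSup_upper)
  show "norm (Y k n) \<in> range (\<lambda>(k, n). norm (Y k n))" by (rule range_eqI[of _ _ "(k, n)"]) simp
  show "bdd_above (range (\<lambda>(k, n). norm (Y k n)))"
    using assms by (auto intro!: bdd_aboveI[of _ C])
qed

lemma normW_least:
  assumes "\<And>k n. norm (Y k n) \<le> C"
  shows "normW Y \<le> C"
  unfolding normW_def
  by (rule cSup_least) (auto simp: assms)

theorem theorem4p9:
  fixes \<BB> :: "('a::banach_lattice \<Rightarrow> 'a) set"
    and \<xi> :: "nat \<Rightarrow> 'a \<Rightarrow> 'a"
    and T :: "'a \<Rightarrow> 'a"
  assumes "KB_space TYPE('a)"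
    and "boolean_subalgebra \<BB>"
    and "forward_filtration \<BB> \<xi>"
    and "volterra \<BB> T"
  shows "\<exists>F :: nat \<Rightarrow> (nat \<Rightarrow> nat \<Rightarrow> 'a) \<Rightarrow> (nat \<Rightarrow> nat \<Rightarrow> 'a).
     F 1 ` Bprime \<xi> \<subseteq> Bprime \<xi> \<and>
     (\<forall>l\<ge>1.
        F l ` Bprime \<xi> \<subseteq> Winf \<xi>
      \<and> (\<forall>Y\<in>Bprime \<xi>. \<forall>Z\<in>Bprime \<xi>. F l (\<lambda>k n. Y k n + Z k n) = (\<lambda>k n. F l Y k n + F l Z k n))
      \<and> (\<forall>c. \<forall>Y\<in>Bprime \<xi>. F l (\<lambda>k n. c *\<^sub>R Y k n) = (\<lambda>k n. c *\<^sub>R F l Y k n))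
      \<and> (\<forall>Y\<in>Bprime \<xi>. \<forall>e>0. \<exists>d>0. \<forall>Z\<in>Bprime \<xi>.
            normW (\<lambda>k n. Z k n - Y k n) < d \<longrightarrow> normW (\<lambda>k n. F l Z k n - F l Y k n) < e)
      \<and> (\<forall>x\<in>Mb \<xi>. F l (\<lambda>k. (sshift ^^ k) x) = (\<lambda>k. (sshift ^^ k) ((hatT \<xi> T ^^ l) x)))
      \<and> (\<forall>Y\<in>Bprime \<xi>. F l Y = (F 1 ^^ l) Y))"
proof -
  note B = assms(2,3)
  have pos: "positive_operator T" using assms(4) by (simp add: volterra_def)
  obtain K where K: "K \<ge> 0" "\<And>y. norm (T y) \<le> K * norm y" using pos_op_bounded[OF pos] by blast
  note HA = hatT_pow_add[OF B pos] and HS = hatT_pow_scale[OF B pos] and HD = hatT_pow_diff[OF B pos]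
  note HN = hatT_pow_norm[OF B pos K] and HM = hatT_pow_Mb[OF B assms(4) K]
  have BW: "Y \<in> Bprime \<xi> \<Longrightarrow> Y \<in> Winf \<xi>" for Y using Bprime_Winf[OF B] by blast
  have Y0: "Y \<in> Bprime \<xi> \<Longrightarrow> Y 0 \<in> Mb \<xi>" for Y
  proof -
    assume "Y \<in> Bprime \<xi>"
    then have "Y 0 \<in> Mb ((Lshift ^^ 0) \<xi>)" using BW[of Y] unfolding Winf_def by blast
    then show ?thesis by simp
  qed
  have WC: "Y \<in> Bprime \<xi> \<Longrightarrow> \<exists>C. \<forall>k n. norm (Y k n) \<le> C" for Y using BW[of Y] by (auto simp: Winf_def)
  define F :: "nat \<Rightarrow> (nat \<Rightarrow> nat \<Rightarrow> 'a) \<Rightarrow> (nat \<Rightarrow> nat \<Rightarrow> 'a)" where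
    "F l Y = (\<lambda>k. (sshift ^^ k) ((hatT \<xi> T ^^ l) (Y 0)))" for l Y
  have pw: "(F 1 ^^ l) Y = F l Y" if "l \<ge> 1" for l Y
    using that
  proof (induction l)
    case 0 then show ?case by simp
  next
    case (Suc l)
    show ?case
    proof (cases "l = 0")
      case True then show ?thesis by simp
    next
      case False
      then have "(F 1 ^^ Suc l) Y = F 1 (F l Y)" using Suc.IH by simp
      also have "\<dots> = F (Suc l) Y" by (simp add: F_def)
      finally show ?thesis .
    qed
  qed
  show ?thesis
  proof (rule exI[of _ F], intro conjI allI impI ballI)
    show "F 1 ` Bprime \<xi> \<subseteq> Bprime \<xi>"
    proof
      fix Z assume "Z \<in> F 1 ` Bprime \<xi>"
      then obtain Y where Y: "Y \<in> Bprime \<xi>" "Z = F 1 Y" by blast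
      have "(hatT \<xi> T ^^ 1) (Y 0) \<in> Mb \<xi>" by (rule HM[OF Y0[OF Y(1)]])
      then show "Z \<in> Bprime \<xi>" unfolding Y(2) F_def by (rule gen_Bprime)
    qed
    fix l :: nat assume l: "1 \<le> l"
    show "F l ` Bprime \<xi> \<subseteq> Winf \<xi>"
      unfolding F_def using orbit_Winf[OF B HM[OF Y0]] by blast
    show "F l (\<lambda>k n. Y k n + Z k n) = (\<lambda>k n. F l Y k n + F l Z k n)" for Y Z
      unfolding F_def by (simp add: HA ssh_pow_add)
    show "F l (\<lambda>k n. c *\<^sub>R Y k n) = (\<lambda>k n. c *\<^sub>R F l Y k n)" for c Y
      unfolding F_def by (simp add: HS ssh_pow_scale)
    show "F l (\<lambda>k. (sshift ^^ k) x) = (\<lambda>k. (sshift ^^ k) ((hatT \<xi> T ^^ l) x))" for x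
      unfolding F_def by simp
    show "F l Y = (F 1 ^^ l) Y" for Y using pw[OF l] by simp
  next
    fix l :: nat and Y e assume l: "1 \<le> l" and Y: "Y \<in> Bprime \<xi>" and e: "(0::real) < e"
    define d where "d = e / (K ^ l + 1)"
    have Kl: "0 \<le> K ^ l" using K(1) by simp
    have d0: "d > 0" unfolding d_def using e Kl by simp
    show "\<exists>d>0. \<forall>Z\<in>Bprime \<xi>. normW (\<lambda>k n. Z k n - Y k n) < d \<longrightarrow>
            normW (\<lambda>k n. F l Z k n - F l Y k n) < e"
    proof (intro exI[of _ d] conjI ballI impI d0)
      fix Z assume Z: "Z \<in> Bprime \<xi>" and lt: "normW (\<lambda>k n. Z k n - Y k n) < d"
      obtain C1 where C1: "\<And>k n. norm (Y k n) \<le> C1" using WC[OF Y] by blast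
      obtain C2 where C2: "\<And>k n. norm (Z k n) \<le> C2" using WC[OF Z] by blast
      have bdd: "norm (Z k n - Y k n) \<le> C2 + C1" for k n
        using norm_triangle_ineq4[of "Z k n" "Y k n"] C1[of k n] C2[of k n] by linarith
      have up: "norm (Z 0 m - Y 0 m) \<le> normW (\<lambda>k n. Z k n - Y k n)" for m
        using normW_upper[of "\<lambda>k n. Z k n - Y k n", OF bdd] by simp
      have eqd: "F l Z k n - F l Y k n = (sshift ^^ k) ((hatT \<xi> T ^^ l) (\<lambda>n. Z 0 n - Y 0 n)) n" for k n
        unfolding F_def by (simp add: HD ssh_pow_diff)
      have "norm (F l Z k n - F l Y k n) \<le> K ^ l * normW (\<lambda>k n. Z k n - Y k n)" for k n
      proof -
        obtain m where m: "norm ((sshift ^^ k) ((hatT \<xi> T ^^ l) (\<lambda>n. Z 0 n - Y 0 n)) n)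
           \<le> norm ((hatT \<xi> T ^^ l) (\<lambda>n. Z 0 n - Y 0 n) m)" using ssh_pow_norm by blast
        also have "\<dots> \<le> K ^ l * norm (Z 0 m - Y 0 m)" using HN[of l "\<lambda>n. Z 0 n - Y 0 n" m] by simp
        also have "\<dots> \<le> K ^ l * normW (\<lambda>k n. Z k n - Y k n)" by (rule mult_left_mono[OF up Kl])
        finally show ?thesis unfolding eqd .
      qed
      then have "normW (\<lambda>k n. F l Z k n - F l Y k n) \<le> K ^ l * normW (\<lambda>k n. Z k n - Y k n)"
        by (rule normW_least)
      also have "\<dots> \<le> K ^ l * d" using lt Kl by (simp add: mult_left_mono)
      also have "\<dots> < e"
      proof -
        have "K ^ l * d = e * (K ^ l / (K ^ l + 1))" unfolding d_def by simp
        also have "\<dots> < e * 1" using e Kl by (intro mult_strict_left_mono) simp_all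
        finally show ?thesis by simp
      qed
      finally show "normW (\<lambda>k n. F l Z k n - F l Y k n) < e" .
    qed
  qed
qed

end
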